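(* Let $A\subseteq B\subseteq C$ be extensions of commutative rings. Then there is an exact sequence of abelian groups $$0\longrightarrow \mathfrak{C}(A,B)\longrightarrow \mathfrak{C}(A,C)\longrightarrow \mathfrak{C}(B,C),$$ where the first map is induced by the inclusion $\mathscr{G}(A,B)\subseteq \mathscr{G}(A,C)$ and the second map is induced by $L\mapsto LB$.
   Context: All rings are commutative with identity. For an extension of rings $R\subseteq S$ and $R$-submodules $L,L'$ of $S$, $LL'$ denotes the $R$-submodule of $S$ of all finite sums $\sum x_ky_k$ with $x_k\in L$, $y_k\in L'$. An $R$-submodule $L$ of $S$ is an invertible ideal of the extension $R\subseteq S$ if $LL'=R$ for some $R$-submodule $L'$ of $S$. These form an abelian group $\mathscr{G}(R,S)$ under multiplication with identity $R$, and $\mathfrak{C}(R,S)=\mathscr{G}(R,S)/\{Rx: x\in S^\ast\}$ is the ideal class group of the extension ($S^\ast$ the unit group of $S$). *)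

theory Defs
  imports "HOL-Algebra.Coset"
begin

text \<open>Ambient commutative ring: a type of class comm_ring_1 (the ring C).
 Subrings of it are given as sets.\<close>

definition subring_of :: "'a::comm_ring_1 set \<Rightarrow> bool" where
  "subring_of R \<longleftrightarrow> 1 \<in> R \<and> (\<forall>x\<in>R. \<forall>y\<in>R. x + y \<in> R \<and> x * y \<in> R) \<and> (\<forall>x\<in>R. - x \<in> R)"

definition submod :: "'a::comm_ring_1 set \<Rightarrow> 'a set \<Rightarrow> 'a set \<Rightarrow> bool" where
  "submod R S L \<longleftrightarrow> L \<subseteq> S \<and> 0 \<in> L \<and> (\<forall>x\<in>L. \<forall>y\<in>L. x + y \<in> L) \<and> (\<forall>r\<in>R. \<forall>x\<in>L. r * x \<in> L)"

definition ext_prod :: "'a::comm_ring_1 set \<Rightarrow> 'a set \<Rightarrow> 'a set" where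
  "ext_prod L M = {(\<Sum>i<n. x i * y i) | (n::nat) x y. \<forall>i<n. x i \<in> L \<and> y i \<in> M}"

definition invertible_ideal :: "'a::comm_ring_1 set \<Rightarrow> 'a set \<Rightarrow> 'a set \<Rightarrow> bool" where
  "invertible_ideal R S L \<longleftrightarrow> submod R S L \<and> (\<exists>L'. submod R S L' \<and> ext_prod L L' = R)"

definition IG :: "'a::comm_ring_1 set \<Rightarrow> 'a set \<Rightarrow> 'a set monoid" where
  "IG R S = \<lparr>carrier = {L. invertible_ideal R S L}, mult = ext_prod, one = R\<rparr>"

definition unit_in :: "'a::comm_ring_1 set \<Rightarrow> 'a \<Rightarrow> bool" where
  "unit_in S x \<longleftrightarrow> x \<in> S \<and> (\<exists>y\<in>S. x * y = 1)"

definition cyc :: "'a::comm_ring_1 set \<Rightarrow> 'a \<Rightarrow> 'a set" where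
  "cyc R x = {r * x | r. r \<in> R}"

definition Princ :: "'a::comm_ring_1 set \<Rightarrow> 'a set \<Rightarrow> 'a set set" where
  "Princ R S = {cyc R x | x. unit_in S x}"

definition ClassGroup :: "'a::comm_ring_1 set \<Rightarrow> 'a set \<Rightarrow> 'a set set monoid" where
  "ClassGroup R S = IG R S Mod Princ R S"

definition ideal_class :: "'a::comm_ring_1 set \<Rightarrow> 'a set \<Rightarrow> 'a set \<Rightarrow> 'a set set" where
  "ideal_class R S L = r_coset (IG R S) (Princ R S) L"

end

theory Submission
  imports Defs
begin


lemma ep_induct:
  assumes "s \<in> ext_prod L M" "P 0" "\<And>a b. P a \<Longrightarrow> P b \<Longrightarrow> P (a+b)"
    "\<And>x y. x\<in>L \<Longrightarrow> y\<in>M \<Longrightarrow> P (x*y)"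
  shows "P s"
proof -
  obtain n :: nat and x y where s: "s = (\<Sum>i<n. x i * y i)" and xy: "\<forall>i<n. x i \<in> L \<and> y i \<in> M"
    using assms(1) unfolding ext_prod_def by blast
  have "\<forall>k\<le>n. P (\<Sum>i<k. x i * y i)"
  proof (intro allI impI)
    fix k assume "k \<le> n" then show "P (\<Sum>i<k. x i * y i)"
    proof (induction k)
      case (Suc k)
      then have "k < n" by simp
      then have "P (x k * y k)" using xy assms(4) by blast
      then show ?case using Suc assms(3) by simp
    qed (simp add: assms(2))
  qed
  then show ?thesis using s by simp
qed

lemma ep_I: "\<forall>i<(n::nat). x i \<in> L \<and> y i \<in> M \<Longrightarrow> (\<Sum>i<n. x i * y i) \<in> ext_prod L M"
  unfolding ext_prod_def by blast

lemma ep_zero: "0 \<in> ext_prod L M"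
  unfolding ext_prod_def by (rule CollectI, rule exI[of _ 0]) auto

lemma ep_add_prod:
  assumes "s \<in> ext_prod L M" "a \<in> L" "b \<in> M"
  shows "s + a * b \<in> ext_prod L M"
proof -
  obtain n :: nat and x y where s: "s = (\<Sum>i<n. x i * y i)" and xy: "\<forall>i<n. x i \<in> L \<and> y i \<in> M"
    using assms(1) unfolding ext_prod_def by blast
  have "(\<Sum>i<Suc n. (x(n:=a)) i * (y(n:=b)) i) = s + a * b"
  proof -
    have "(\<Sum>i<n. (x(n:=a)) i * (y(n:=b)) i) = (\<Sum>i<n. x i * y i)"
      by (rule sum.cong) auto
    then show ?thesis using s by simp
  qed
  moreover have "\<forall>i<Suc n. (x(n:=a)) i \<in> L \<and> (y(n:=b)) i \<in> M"
    using xy assms by (auto simp: less_Suc_eq)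
  ultimately show ?thesis using ep_I[of "Suc n" "x(n:=a)" L "y(n:=b)" M] by simp
qed

lemma ep_prod: "a \<in> L \<Longrightarrow> b \<in> M \<Longrightarrow> a * b \<in> ext_prod L M"
  using ep_add_prod[OF ep_zero, of a L b M] by simp

lemma ep_add:
  assumes "s \<in> ext_prod L M" "t \<in> ext_prod L M"
  shows "s + t \<in> ext_prod L M"
proof -
  have "\<forall>s\<in>ext_prod L M. s + t \<in> ext_prod L M"
    using assms(2)
  proof (rule ep_induct)
    show "\<forall>s\<in>ext_prod L M. s + 0 \<in> ext_prod L M" by simp
  next
    fix a b assume "\<forall>s\<in>ext_prod L M. s + a \<in> ext_prod L M" "\<forall>s\<in>ext_prod L M. s + b \<in> ext_prod L M"
    then show "\<forall>s\<in>ext_prod L M. s + (a + b) \<in> ext_prod L M"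
      by (simp add: add.assoc[symmetric])
  qed (auto intro: ep_add_prod)
  then show ?thesis using assms by blast
qed

lemma ep_sub:
  assumes "0 \<in> P" "\<And>a b. a\<in>P \<Longrightarrow> b\<in>P \<Longrightarrow> a+b \<in> P" "\<And>x y. x\<in>L \<Longrightarrow> y\<in>M \<Longrightarrow> x*y \<in> P"
  shows "ext_prod L M \<subseteq> P"
  using ep_induct[where P="\<lambda>s. s \<in> P"] assms by blast

lemma ep_comm1: "ext_prod L M \<subseteq> ext_prod M L"
  by (rule ep_sub) (auto intro: ep_zero ep_add, metis ep_prod mult.commute)

lemma ep_comm: "ext_prod L M = ext_prod M L"
  using ep_comm1 by blast

lemma ep_mono: "L \<subseteq> L' \<Longrightarrow> M \<subseteq> M' \<Longrightarrow> ext_prod L M \<subseteq> ext_prod L' M'"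
  by (rule ep_sub) (auto intro: ep_zero ep_add intro!: ep_prod)

lemma ep_assoc1: "ext_prod (ext_prod L M) N \<subseteq> ext_prod L (ext_prod M N)"
proof (rule ep_sub[OF ep_zero ep_add])
  fix s n assume s: "s \<in> ext_prod L M" and n: "n \<in> N"
  show "s * n \<in> ext_prod L (ext_prod M N)"
    using s
  proof (rule ep_induct)
    fix a b assume "a * n \<in> ext_prod L (ext_prod M N)" "b * n \<in> ext_prod L (ext_prod M N)"
    then show "(a + b) * n \<in> ext_prod L (ext_prod M N)" by (simp add: distrib_right ep_add)
  next
    fix x y assume "x \<in> L" "y \<in> M"
    then have "x * (y * n) \<in> ext_prod L (ext_prod M N)" by (intro ep_prod n)
    then show "x * y * n \<in> ext_prod L (ext_prod M N)" by (simp add: mult.assoc)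
  qed (simp add: ep_zero)
qed

lemma ep_assoc: "ext_prod (ext_prod L M) N = ext_prod L (ext_prod M N)"
proof
  show "ext_prod L (ext_prod M N) \<subseteq> ext_prod (ext_prod L M) N"
    using ep_assoc1[of N M L] by (simp add: ep_comm)
qed (rule ep_assoc1)

lemma ep_lcomm: "ext_prod L (ext_prod M N) = ext_prod M (ext_prod L N)"
  by (metis ep_assoc ep_comm)

lemmas ep_ac = ep_assoc ep_comm ep_lcomm

lemma subringD: assumes "subring_of R"
  shows "1 \<in> R" "x\<in>R \<Longrightarrow> y\<in>R \<Longrightarrow> x+y \<in> R" "x\<in>R \<Longrightarrow> y\<in>R \<Longrightarrow> x*y \<in> R" "x\<in>R \<Longrightarrow> -x \<in> R"
    "0 \<in> R"
  using assms unfolding subring_of_def apply auto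
  by (metis add.right_inverse)

lemma ep_one:
  assumes "subring_of R" "submod R S L"
  shows "ext_prod R L = L"
proof
  show "ext_prod R L \<subseteq> L" using assms(2) unfolding submod_def by (intro ep_sub) auto
  show "L \<subseteq> ext_prod R L" using ep_prod[OF subringD(1)[OF assms(1)]] by fastforce
qed

lemma ep_in:
  assumes "subring_of S" "L \<subseteq> S" "M \<subseteq> S" shows "ext_prod L M \<subseteq> S"
  using assms by (intro ep_sub) (auto dest: subringD)

lemma submod_ep:
  assumes "subring_of S" "submod R S L" "submod R S M"
  shows "submod R S (ext_prod L M)"
  unfolding submod_def
proof (intro conjI ballI)
  show "ext_prod L M \<subseteq> S" using assms ep_in unfolding submod_def by blast
  fix r s assume r: "r \<in> R" and s: "s \<in> ext_prod L M"
  show "r * s \<in> ext_prod L M" using s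
    by (rule ep_induct) (use assms(2) r in \<open>auto simp: distrib_left ep_zero submod_def
        intro!: ep_add ep_prod simp flip: mult.assoc\<close>)
qed (auto intro: ep_zero ep_add)

lemma submod_ring: "subring_of R \<Longrightarrow> subring_of S \<Longrightarrow> R \<subseteq> S \<Longrightarrow> submod R S R"
  unfolding submod_def by (auto dest: subringD)

lemma IG_group:
  assumes R: "subring_of R" and S: "subring_of S" and RS: "R \<subseteq> S"
  shows "comm_group (IG R S)"
proof (rule comm_groupI)
  fix x y assume "x \<in> carrier (IG R S)" "y \<in> carrier (IG R S)"
  then obtain x' y' where x: "submod R S x" "submod R S x'" "ext_prod x x' = R"
    and y: "submod R S y" "submod R S y'" "ext_prod y y' = R"
    by (auto simp: IG_def invertible_ideal_def)
  have "ext_prod (ext_prod x y) (ext_prod x' y') = ext_prod (ext_prod x x') (ext_prod y y')"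
    by (simp add: ep_ac)
  also have "\<dots> = R" using ep_one[OF R submod_ring[OF R S RS]] x y by simp
  finally have e: "ext_prod (ext_prod x y) (ext_prod x' y') = R" .
  have "submod R S (ext_prod x y)" "submod R S (ext_prod x' y')"
    using x y submod_ep[OF S] by auto
  then show "x \<otimes>\<^bsub>IG R S\<^esub> y \<in> carrier (IG R S)"
    using e unfolding IG_def invertible_ideal_def by auto
next
  show "\<one>\<^bsub>IG R S\<^esub> \<in> carrier (IG R S)"
    using ep_one[OF R submod_ring[OF R S RS]] submod_ring[OF R S RS]
    by (auto simp: IG_def invertible_ideal_def)
next
  fix x assume "x \<in> carrier (IG R S)"
  then obtain x' where x: "submod R S x" "submod R S x'" "ext_prod x x' = R"
    by (auto simp: IG_def invertible_ideal_def)
  then show "\<one>\<^bsub>IG R S\<^esub> \<otimes>\<^bsub>IG R S\<^esub> x = x" using ep_one[OF R] by (simp add: IG_def)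
  show "\<exists>y\<in>carrier (IG R S). y \<otimes>\<^bsub>IG R S\<^esub> x = \<one>\<^bsub>IG R S\<^esub>"
    using x by (intro bexI[of _ x']) (auto simp: IG_def invertible_ideal_def ep_comm)
qed (auto simp: IG_def ep_ac)



lemma cyc_eq: "cyc R x = (\<lambda>r. r * x) ` R" unfolding cyc_def by auto

lemma cls_mem: "M \<in> ideal_class R S L \<longleftrightarrow> (\<exists>x. unit_in S x \<and> M = ext_prod (cyc R x) L)"
  unfolding ideal_class_def r_coset_def IG_def Princ_def by auto

lemma cycI: "r \<in> R \<Longrightarrow> r * x \<in> cyc R x" unfolding cyc_def by blast
lemma cycE: "a \<in> cyc R x \<Longrightarrow> (\<And>r. r \<in> R \<Longrightarrow> a = r * x \<Longrightarrow> P) \<Longrightarrow> P"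
  unfolding cyc_def by blast

lemma subring_UNIV: "subring_of UNIV" unfolding subring_of_def by auto

lemma cyc_add: "subring_of R \<Longrightarrow> a \<in> cyc R x \<Longrightarrow> b \<in> cyc R x \<Longrightarrow> a + b \<in> cyc R x"
proof -
  assume R: "subring_of R" and a: "a \<in> cyc R x" and b: "b \<in> cyc R x"
  obtain r where r: "r \<in> R" "a = r * x" using a by (rule cycE)
  obtain s where s: "s \<in> R" "b = s * x" using b by (rule cycE)
  have "r + s \<in> R" using subringD(2)[OF R r(1) s(1)] .
  then have "(r + s) * x \<in> cyc R x" by (rule cycI)
  then show ?thesis using r s by (simp add: distrib_right)
qed

lemma cyc_zero: "subring_of R \<Longrightarrow> 0 \<in> cyc R x"
  using cycI[OF subringD(5), of R x] by simp

lemma cyc_self: "subring_of R \<Longrightarrow> x \<in> cyc R x"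
  using cycI[OF subringD(1), of R x] by simp

lemma ep_cyc_ring:
  assumes R: "subring_of R" and T: "subring_of T" and RT: "R \<subseteq> T"
  shows "ext_prod (cyc R x) T = cyc T x"
proof
  show "ext_prod (cyc R x) T \<subseteq> cyc T x"
  proof (rule ep_sub)
    fix a b assume "a \<in> cyc R x" "b \<in> T"
    from \<open>a \<in> cyc R x\<close> obtain r where r: "r \<in> R" "a = r * x" by (rule cycE)
    then have "a * b = (r * b) * x" by (simp add: ac_simps)
    moreover have "r * b \<in> T" using r RT \<open>b \<in> T\<close> subringD(3)[OF T] by blast
    ultimately show "a * b \<in> cyc T x" using cycI by metis
  next
    show "0 \<in> cyc T x" by (rule cyc_zero[OF T])
  next
    fix a b assume "a \<in> cyc T x" "b \<in> cyc T x"
    then show "a + b \<in> cyc T x" by (rule cyc_add[OF T])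
  qed
  show "cyc T x \<subseteq> ext_prod (cyc R x) T"
  proof
    fix a assume "a \<in> cyc T x"
    then obtain t where t: "t \<in> T" "a = t * x" by (rule cycE)
    then show "a \<in> ext_prod (cyc R x) T" using ep_prod[OF cyc_self[OF R, of x] t(1)] by (simp add: ac_simps)
  qed
qed

lemma ep_cyc:
  assumes R: "subring_of R"
  shows "ext_prod (cyc R x) (cyc R y) = cyc R (x * y)"
proof
  show "ext_prod (cyc R x) (cyc R y) \<subseteq> cyc R (x * y)"
  proof (rule ep_sub)
    fix a b assume "a \<in> cyc R x" "b \<in> cyc R y"
    then obtain r s where "r \<in> R" "a = r * x" "s \<in> R" "b = s * y" by (metis cycE)
    moreover have "r * s \<in> R" using calculation subringD(3)[OF R] by blast
    moreover have "a * b = (r * s) * (x * y)" using calculation by (simp add: ac_simps)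
    ultimately show "a * b \<in> cyc R (x * y)" using cycI by metis
  next
    show "0 \<in> cyc R (x*y)" by (rule cyc_zero[OF R])
  next
    fix a b assume "a \<in> cyc R (x*y)" "b \<in> cyc R (x*y)"
    then show "a + b \<in> cyc R (x*y)" by (rule cyc_add[OF R])
  qed
  show "cyc R (x * y) \<subseteq> ext_prod (cyc R x) (cyc R y)"
  proof
    fix a assume "a \<in> cyc R (x * y)"
    then obtain t where t: "t \<in> R" "a = t * (x * y)" by (rule cycE)
    have "t * x \<in> cyc R x" using t by (intro cycI)
    from ep_prod[OF this cyc_self[OF R, of y]] show "a \<in> ext_prod (cyc R x) (cyc R y)"
      using t by (simp add: ac_simps)
  qed
qed

lemma cyc_one: "cyc R 1 = R" unfolding cyc_def by simp

lemma submod_cyc: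
  assumes R: "subring_of R" and S: "subring_of S" and RS: "R \<subseteq> S" and x: "x \<in> S"
  shows "submod R S (cyc R x)"
  unfolding submod_def
proof (intro conjI ballI)
  show "cyc R x \<subseteq> S"
  proof
    fix a assume "a \<in> cyc R x"
    then obtain r where "r \<in> R" "a = r * x" by (rule cycE)
    then show "a \<in> S" using RS x subringD(3)[OF S] by blast
  qed
  fix r a assume r: "r \<in> R" "a \<in> cyc R x"
  then obtain s where s: "s \<in> R" "a = s * x" by (metis cycE)
  then have "r * a = (r * s) * x" by (simp add: mult.assoc)
  moreover have "r * s \<in> R" using r s subringD(3)[OF R] by blast
  ultimately show "r * a \<in> cyc R x" using cycI by metis
next
  show "0 \<in> cyc R x" by (rule cyc_zero[OF R])
next
  fix a b assume "a \<in> cyc R x" "b \<in> cyc R x"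
  then show "a + b \<in> cyc R x" by (rule cyc_add[OF R])
qed

lemma cyc_IG:
  assumes R: "subring_of R" and S: "subring_of S" and RS: "R \<subseteq> S" and x: "unit_in S x"
  shows "cyc R x \<in> carrier (IG R S)"
proof -
  obtain y where y: "y \<in> S" "x * y = 1" "x \<in> S" using x unfolding unit_in_def by auto
  show ?thesis unfolding IG_def invertible_ideal_def
    using submod_cyc[OF R S RS y(1)] submod_cyc[OF R S RS y(3)] ep_cyc[OF R, of x y] y(2)
    by (auto simp: cyc_one)
qed

lemma Princ_subgroup:
  assumes R: "subring_of R" and S: "subring_of S" and RS: "R \<subseteq> S"
  shows "subgroup (Princ R S) (IG R S)"
proof -
  interpret comm_group "IG R S" using IG_group[OF assms] .
  show ?thesis
  proof (rule subgroupI)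
    show "Princ R S \<subseteq> carrier (IG R S)" unfolding Princ_def using cyc_IG[OF assms] by auto
    have "unit_in S 1" unfolding unit_in_def using subringD(1)[OF S] by auto
    then show "Princ R S \<noteq> {}" unfolding Princ_def by auto
  next
    fix a assume "a \<in> Princ R S"
    then obtain x where x: "unit_in S x" "a = cyc R x" unfolding Princ_def by auto
    then obtain y where y: "y \<in> S" "x * y = 1" "x \<in> S" unfolding unit_in_def by auto
    have uy: "unit_in S y" using y unfolding unit_in_def by (auto simp: mult.commute)
    have "inv\<^bsub>IG R S\<^esub> a = cyc R y"
      by (rule inv_equality) (use x y cyc_IG[OF assms] uy ep_cyc[OF R, of y x] in
          \<open>auto simp: IG_def cyc_one mult.commute\<close>)
    then show "inv\<^bsub>IG R S\<^esub> a \<in> Princ R S" using uy unfolding Princ_def by auto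
  next
    fix a b assume "a \<in> Princ R S" "b \<in> Princ R S"
    then obtain x y where "unit_in S x" "a = cyc R x" "unit_in S y" "b = cyc R y"
      unfolding Princ_def by auto
    moreover have "unit_in S (x * y)" using calculation subringD(3)[OF S]
      unfolding unit_in_def by (metis mult.assoc mult.commute mult_1_right)
    ultimately show "a \<otimes>\<^bsub>IG R S\<^esub> b \<in> Princ R S"
      unfolding Princ_def by (auto simp: IG_def ep_cyc[OF R])
  qed
qed

lemma CG_comm:
  assumes R: "subring_of R" and S: "subring_of S" and RS: "R \<subseteq> S"
  shows "comm_group (ClassGroup R S)"
  unfolding ClassGroup_def
  using comm_group.abelian_FactGroup[OF IG_group[OF assms] Princ_subgroup[OF assms]] .

lemma class_iff:
  assumes R: "subring_of R" and S: "subring_of S" and RS: "R \<subseteq> S"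
    and L: "L \<in> carrier (IG R S)" and M: "M \<in> carrier (IG R S)"
  shows "ideal_class R S M = ideal_class R S L \<longleftrightarrow> M \<in> ideal_class R S L"
proof -
  interpret comm_group "IG R S" using IG_group[OF assms(1-3)] .
  note sg = Princ_subgroup[OF assms(1-3)]
  show ?thesis unfolding ideal_class_def
    using rcos_self[OF M sg] repr_independence[OF _ L sg] by auto
qed

lemma class_carrier:
  assumes R: "subring_of R" and S: "subring_of S" and RS: "R \<subseteq> S"
  shows "carrier (ClassGroup R S) = ideal_class R S ` carrier (IG R S)"
  unfolding ClassGroup_def ideal_class_def carrier_FactGroup by simp

lemma class_mult:
  assumes R: "subring_of R" and S: "subring_of S" and RS: "R \<subseteq> S"
    and L: "L \<in> carrier (IG R S)" and M: "M \<in> carrier (IG R S)"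
  shows "ideal_class R S L \<otimes>\<^bsub>ClassGroup R S\<^esub> ideal_class R S M = ideal_class R S (ext_prod L M)"
proof -
  interpret comm_group "IG R S" using IG_group[OF assms(1-3)] .
  interpret normal "Princ R S" "IG R S"
    using subgroup_imp_normal[OF Princ_subgroup[OF assms(1-3)]] .
  show ?thesis unfolding ClassGroup_def ideal_class_def using rcos_sum[OF L M]
    by (simp add: IG_def)
qed

lemma class_one:
  assumes R: "subring_of R" and S: "subring_of S" and RS: "R \<subseteq> S"
  shows "ideal_class R S R = \<one>\<^bsub>ClassGroup R S\<^esub>"
proof -
  interpret comm_group "IG R S" using IG_group[OF assms(1-3)] .
  show ?thesis unfolding ClassGroup_def ideal_class_def
    using coset_mult_one subgroup.subset[OF Princ_subgroup[OF assms]] by (simp add: IG_def)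
qed

lemma class_self:
  assumes R: "subring_of R" and S: "subring_of S" and RS: "R \<subseteq> S"
    and L: "L \<in> carrier (IG R S)"
  shows "L \<in> ideal_class R S L"
proof -
  interpret comm_group "IG R S" using IG_group[OF assms(1-3)] .
  show ?thesis unfolding ideal_class_def using rcos_self[OF L Princ_subgroup[OF assms(1-3)]] .
qed



lemma car_inv:
  assumes "L \<in> carrier (IG R S)"
  obtains L' where "L' \<in> carrier (IG R S)" "ext_prod L L' = R" "submod R S L" "submod R S L'"
  using assms unfolding IG_def invertible_ideal_def by (auto simp: ep_comm)

lemma closed:
  assumes "subring_of R" "subring_of S" "R \<subseteq> S" "L \<in> carrier (IG R S)" "M \<in> carrier (IG R S)"
  shows "ext_prod L M \<in> carrier (IG R S)"
proof -
  interpret comm_group "IG R S" using IG_group[OF assms(1-3)] .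
  show ?thesis using m_closed[OF assms(4,5)] by (simp add: IG_def)
qed

lemma unit_UNIV: "unit_in B x \<Longrightarrow> unit_in UNIV x" unfolding unit_in_def by auto

lemma one_car: "subring_of R \<Longrightarrow> subring_of S \<Longrightarrow> R \<subseteq> S \<Longrightarrow> R \<in> carrier (IG R S)"
  using submod_ring ep_one[OF _ submod_ring] unfolding IG_def invertible_ideal_def by fastforce

context
  fixes A B :: "'a::comm_ring_1 set"
  assumes A: "subring_of A" and B: "subring_of B" and AB: "A \<subseteq> B"
begin

lemma AU: "A \<subseteq> UNIV" and BU: "B \<subseteq> UNIV" by auto

lemma subB: "subring_of (UNIV::'a set)" by (rule subring_UNIV)

lemma submod_AB: "submod A UNIV B"
  unfolding submod_def using AB subringD[OF B] by auto

lemma BB: "ext_prod B B = B"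
  using ep_one[OF B submod_ring[OF B B subset_refl]] .

lemma AB_eq: "ext_prod A B = B"
  using ep_one[OF A submod_AB] .

lemma AA: "ext_prod A A = A"
  using ep_one[OF A submod_ring[OF A A subset_refl]] .

lemma car_mono: "L \<in> carrier (IG A B) \<Longrightarrow> L \<in> carrier (IG A UNIV)"
  unfolding IG_def invertible_ideal_def submod_def by auto

lemma extB_car:
  assumes L: "L \<in> carrier (IG A UNIV)"
  shows "ext_prod L B \<in> carrier (IG B UNIV)"
proof -
  obtain L' where L': "L' \<in> carrier (IG A UNIV)" "ext_prod L L' = A" "submod A UNIV L" "submod A UNIV L'"
    using car_inv[OF L] by blast
  have sm: "submod B UNIV (ext_prod L' B)" if "submod A UNIV L'" for L'
    unfolding submod_def
  proof (intro conjI ballI)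
    fix r s assume r: "r \<in> B" and s: "s \<in> ext_prod L' B"
    have "r * s \<in> ext_prod B (ext_prod L' B)" by (rule ep_prod[OF r s])
    also have "ext_prod B (ext_prod L' B) = ext_prod L' (ext_prod B B)" by (simp add: ep_ac)
    also have "\<dots> = ext_prod L' B" by (simp add: BB)
    finally show "r * s \<in> ext_prod L' B" .
  qed (auto intro: ep_zero ep_add)
  have "ext_prod (ext_prod L B) (ext_prod L' B) = ext_prod (ext_prod L L') (ext_prod B B)"
    by (simp add: ep_ac)
  also have "\<dots> = B" using L'(2) BB AB_eq by simp
  finally show ?thesis using sm[OF L'(3)] sm[OF L'(4)]
    unfolding IG_def invertible_ideal_def by auto
qed

lemma extB_mult: "ext_prod (ext_prod L M) B = ext_prod (ext_prod L B) (ext_prod M B)"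
proof -
  have "ext_prod (ext_prod L B) (ext_prod M B) = ext_prod (ext_prod L M) (ext_prod B B)"
    by (simp add: ep_ac)
  then show ?thesis by (simp add: BB)
qed

lemma extB_one:
  assumes L: "L \<in> carrier (IG A B)"
  shows "ext_prod L B = B"
proof -
  obtain L' where L': "L' \<in> carrier (IG A B)" "ext_prod L L' = A" "submod A B L" "submod A B L'"
    using car_inv[OF L] by blast
  have LB: "L \<subseteq> B" "L' \<subseteq> B" using L' unfolding submod_def by auto
  show ?thesis
  proof
    show "ext_prod L B \<subseteq> B" using ep_in[OF B LB(1) subset_refl] .
    have "B = ext_prod (ext_prod L L') B" using AB_eq L'(2) by simp
    also have "\<dots> = ext_prod L (ext_prod L' B)" by (simp add: ep_assoc)
    also have "\<dots> \<subseteq> ext_prod L B" using ep_mono[OF subset_refl ep_in[OF B LB(2) subset_refl]] .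
    finally show "B \<subseteq> ext_prod L B" .
  qed
qed

lemma cyc_ext: "ext_prod (ext_prod (cyc A x) L) B = ext_prod (cyc B x) (ext_prod L B)"
proof -
  have "ext_prod (cyc B x) (ext_prod L B) = ext_prod (ext_prod (cyc A x) B) (ext_prod L B)"
    using ep_cyc_ring[OF A B AB] by simp
  also have "\<dots> = ext_prod (ext_prod (cyc A x) L) (ext_prod B B)" by (simp add: ep_ac)
  finally show ?thesis by (simp add: BB)
qed

lemma xinB:
  assumes L: "L \<in> carrier (IG A B)" and M: "M \<in> carrier (IG A B)"
    and eq: "M = ext_prod (cyc A x) L"
  shows "x \<in> B"
proof -
  obtain L' where L': "L' \<in> carrier (IG A B)" "ext_prod L L' = A" "submod A B L" "submod A B L'"
    using car_inv[OF L] by blast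
  have MB: "M \<subseteq> B" using M unfolding IG_def invertible_ideal_def submod_def by auto
  have L'B: "L' \<subseteq> B" using L' unfolding submod_def by auto
  have "1 \<in> ext_prod L L'" using L'(2) subringD(1)[OF A] by simp
  then have "x * 1 \<in> B"
  proof (rule ep_induct)
    show "x * 0 \<in> B" using subringD(5)[OF B] by simp
  next
    fix a b assume "x * a \<in> B" "x * b \<in> B"
    then show "x * (a + b) \<in> B" using subringD(2)[OF B] by (simp add: distrib_left)
  next
    fix l l' assume l: "l \<in> L" and l': "l' \<in> L'"
    have "x * l \<in> M" unfolding eq using ep_prod[OF cyc_self[OF A, of x] l] .
    then have "(x * l) * l' \<in> B" using MB L'B l' subringD(3)[OF B] by blast
    then show "x * (l * l') \<in> B" by (simp add: mult.assoc)
  qed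
  then show ?thesis by simp
qed

lemma cyc_cancel:
  assumes L: "submod A S L" and xy: "y * x = 1"
  shows "ext_prod (cyc A y) (ext_prod (cyc A x) L) = L"
proof -
  have "ext_prod (cyc A y) (ext_prod (cyc A x) L) = ext_prod (ext_prod (cyc A y) (cyc A x)) L"
    by (simp add: ep_assoc)
  also have "\<dots> = L" using ep_cyc[OF A, of y x] xy ep_one[OF A L] by (simp add: cyc_one)
  finally show ?thesis .
qed

lemma fkey:
  assumes L: "L \<in> carrier (IG A B)"
  shows "(\<Union>M\<in>ideal_class A B L. ideal_class A UNIV M) = ideal_class A UNIV L"
proof -
  have "ideal_class A UNIV M = ideal_class A UNIV L" if M: "M \<in> ideal_class A B L" for M
  proof -
    obtain x where x: "unit_in B x" "M = ext_prod (cyc A x) L" using M cls_mem by blast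
    have "M \<in> carrier (IG A B)" using closed[OF A B AB cyc_IG[OF A B AB x(1)] L] x(2) by simp
    then have MC: "M \<in> carrier (IG A UNIV)" by (rule car_mono)
    have "M \<in> ideal_class A UNIV L" using cls_mem x unit_UNIV by blast
    then show ?thesis using class_iff[OF A subring_UNIV AU car_mono[OF L] MC] by blast
  qed
  moreover have "L \<in> ideal_class A B L" by (rule class_self[OF A B AB L])
  ultimately show ?thesis by blast
qed

lemma gkey:
  assumes L: "L \<in> carrier (IG A UNIV)"
  shows "(\<Union>M\<in>ideal_class A UNIV L. ideal_class B UNIV (ext_prod M B)) = ideal_class B UNIV (ext_prod L B)"
proof -
  have "ideal_class B UNIV (ext_prod M B) = ideal_class B UNIV (ext_prod L B)"
    if M: "M \<in> ideal_class A UNIV L" for M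
  proof -
    obtain x where x: "unit_in UNIV x" "M = ext_prod (cyc A x) L" using M cls_mem by blast
    have "M \<in> carrier (IG A UNIV)"
      using closed[OF A subring_UNIV AU cyc_IG[OF A subring_UNIV AU x(1)] L] x(2) by simp
    then have MC: "ext_prod M B \<in> carrier (IG B UNIV)" by (rule extB_car)
    have "ext_prod M B = ext_prod (cyc B x) (ext_prod L B)" using x(2) cyc_ext by simp
    then have "ext_prod M B \<in> ideal_class B UNIV (ext_prod L B)" using cls_mem x(1) by blast
    then show ?thesis using class_iff[OF B subring_UNIV BU extB_car[OF L] MC] by blast
  qed
  moreover have "L \<in> ideal_class A UNIV L" by (rule class_self[OF A subring_UNIV AU L])
  ultimately show ?thesis by blast
qed

end



theorem theorem5p1:
  fixes A B :: "'a::comm_ring_1 set"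
  assumes "subring_of A" and "subring_of B" and "A \<subseteq> B"
  shows "comm_group (ClassGroup A B) \<and> comm_group (ClassGroup A UNIV) \<and> comm_group (ClassGroup B UNIV)
    \<and> (\<exists>f g.
        f \<in> hom (ClassGroup A B) (ClassGroup A UNIV)
      \<and> g \<in> hom (ClassGroup A UNIV) (ClassGroup B UNIV)
      \<and> (\<forall>L \<in> carrier (IG A B). f (ideal_class A B L) = ideal_class A UNIV L)
      \<and> (\<forall>L \<in> carrier (IG A UNIV). g (ideal_class A UNIV L) = ideal_class B UNIV (ext_prod L B))
      \<and> inj_on f (carrier (ClassGroup A B))
      \<and> f ` carrier (ClassGroup A B) = kernel (ClassGroup A UNIV) (ClassGroup B UNIV) g)"
proof -
  note A = assms(1) and B = assms(2) and AB = assms(3)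
  have U: "subring_of (UNIV::'a set)" by (rule subring_UNIV)
  have AU: "A \<subseteq> UNIV" and BU: "B \<subseteq> UNIV" by auto
  note ABs = A B AB and ACs = A U AU and BCs = B U BU
  define f where "f X = (\<Union>L\<in>X. ideal_class A UNIV L)" for X
  define g where "g X = (\<Union>L\<in>X. ideal_class B UNIV (ext_prod L B))" for X
  have fk: "f (ideal_class A B L) = ideal_class A UNIV L" if "L \<in> carrier (IG A B)" for L
    unfolding f_def using fkey[OF ABs that] .
  have gk: "g (ideal_class A UNIV L) = ideal_class B UNIV (ext_prod L B)" if "L \<in> carrier (IG A UNIV)" for L
    unfolding g_def using gkey[OF ABs that] .
  note car1 = class_carrier[OF ABs] and car2 = class_carrier[OF ACs] and car3 = class_carrier[OF BCs]
  have hf: "f \<in> hom (ClassGroup A B) (ClassGroup A UNIV)"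
  proof (rule homI)
    fix X assume "X \<in> carrier (ClassGroup A B)"
    then obtain L where L: "L \<in> carrier (IG A B)" "X = ideal_class A B L" using car1 by auto
    then show "f X \<in> carrier (ClassGroup A UNIV)" using fk car2 car_mono[OF ABs] by auto
  next
    fix X Y assume "X \<in> carrier (ClassGroup A B)" "Y \<in> carrier (ClassGroup A B)"
    then obtain L M where L: "L \<in> carrier (IG A B)" "X = ideal_class A B L"
      and M: "M \<in> carrier (IG A B)" "Y = ideal_class A B M" using car1 by auto
    have LM: "ext_prod L M \<in> carrier (IG A B)" by (rule closed[OF ABs L(1) M(1)])
    show "f (X \<otimes>\<^bsub>ClassGroup A B\<^esub> Y) = f X \<otimes>\<^bsub>ClassGroup A UNIV\<^esub> f Y"
      using class_mult[OF ABs L(1) M(1)] class_mult[OF ACs car_mono[OF ABs L(1)] car_mono[OF ABs M(1)]]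
        fk[OF L(1)] fk[OF M(1)] fk[OF LM] L(2) M(2) by simp
  qed
  have hg: "g \<in> hom (ClassGroup A UNIV) (ClassGroup B UNIV)"
  proof (rule homI)
    fix X assume "X \<in> carrier (ClassGroup A UNIV)"
    then obtain L where L: "L \<in> carrier (IG A UNIV)" "X = ideal_class A UNIV L" using car2 by auto
    then show "g X \<in> carrier (ClassGroup B UNIV)" using gk car3 extB_car[OF ABs] by auto
  next
    fix X Y assume "X \<in> carrier (ClassGroup A UNIV)" "Y \<in> carrier (ClassGroup A UNIV)"
    then obtain L M where L: "L \<in> carrier (IG A UNIV)" "X = ideal_class A UNIV L"
      and M: "M \<in> carrier (IG A UNIV)" "Y = ideal_class A UNIV M" using car2 by auto
    have LM: "ext_prod L M \<in> carrier (IG A UNIV)" by (rule closed[OF ACs L(1) M(1)])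
    show "g (X \<otimes>\<^bsub>ClassGroup A UNIV\<^esub> Y) = g X \<otimes>\<^bsub>ClassGroup B UNIV\<^esub> g Y"
      using class_mult[OF ACs L(1) M(1)] class_mult[OF BCs extB_car[OF ABs L(1)] extB_car[OF ABs M(1)]]
        gk[OF L(1)] gk[OF M(1)] gk[OF LM] L(2) M(2) extB_mult[OF ABs, of L M] by simp
  qed
  have inj: "inj_on f (carrier (ClassGroup A B))"
  proof (rule inj_onI)
    fix X Y assume "X \<in> carrier (ClassGroup A B)" "Y \<in> carrier (ClassGroup A B)" and eq: "f X = f Y"
    then obtain L M where L: "L \<in> carrier (IG A B)" "X = ideal_class A B L"
      and M: "M \<in> carrier (IG A B)" "Y = ideal_class A B M" using car1 by auto
    have "ideal_class A UNIV M = ideal_class A UNIV L" using eq fk[OF L(1)] fk[OF M(1)] L(2) M(2) by simp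
    then have "M \<in> ideal_class A UNIV L"
      using class_iff[OF ACs car_mono[OF ABs L(1)] car_mono[OF ABs M(1)]] by blast
    then obtain x where x: "unit_in UNIV x" "M = ext_prod (cyc A x) L" using cls_mem by blast
    obtain y where xy: "x * y = 1" using x(1) unfolding unit_in_def by auto
    have Lsub: "submod A B L" using L(1) unfolding IG_def invertible_ideal_def by auto
    have xB: "x \<in> B" by (rule xinB[OF ABs L(1) M(1) x(2)])
    have "L = ext_prod (cyc A y) M" using cyc_cancel[OF ABs Lsub, of y x] xy x(2) by (simp add: mult.commute)
    then have yB: "y \<in> B" by (rule xinB[OF ABs M(1) L(1)])
    have "unit_in B x" unfolding unit_in_def using xB yB xy by auto
    then have "M \<in> ideal_class A B L" using cls_mem x(2) by blast
    then have "ideal_class A B M = ideal_class A B L" using class_iff[OF ABs L(1) M(1)] by blast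
    then show "X = Y" using L(2) M(2) by simp
  qed
  have img: "f ` carrier (ClassGroup A B) = kernel (ClassGroup A UNIV) (ClassGroup B UNIV) g"
  proof
    show "f ` carrier (ClassGroup A B) \<subseteq> kernel (ClassGroup A UNIV) (ClassGroup B UNIV) g"
    proof
      fix Y assume "Y \<in> f ` carrier (ClassGroup A B)"
      then obtain L where L: "L \<in> carrier (IG A B)" "Y = f (ideal_class A B L)" using car1 by auto
      have Y: "Y = ideal_class A UNIV L" using fk[OF L(1)] L(2) by simp
      have "g Y = ideal_class B UNIV B" using gk[OF car_mono[OF ABs L(1)]] Y extB_one[OF ABs L(1)] by simp
      also have "\<dots> = \<one>\<^bsub>ClassGroup B UNIV\<^esub>" by (rule class_one[OF BCs])
      finally show "Y \<in> kernel (ClassGroup A UNIV) (ClassGroup B UNIV) g"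
        unfolding kernel_def using Y car2 car_mono[OF ABs L(1)] by auto
    qed
    show "kernel (ClassGroup A UNIV) (ClassGroup B UNIV) g \<subseteq> f ` carrier (ClassGroup A B)"
    proof
      fix Y assume Yk: "Y \<in> kernel (ClassGroup A UNIV) (ClassGroup B UNIV) g"
      then obtain L where L: "L \<in> carrier (IG A UNIV)" "Y = ideal_class A UNIV L"
        unfolding kernel_def using car2 by auto
      obtain L' where L': "L' \<in> carrier (IG A UNIV)" "ext_prod L L' = A"
        "submod A UNIV L" "submod A UNIV L'" using car_inv[OF L(1)] by blast
      have "ideal_class B UNIV (ext_prod L B) = \<one>\<^bsub>ClassGroup B UNIV\<^esub>"
        using Yk unfolding kernel_def using gk[OF L(1)] L(2) by simp
      also have "\<dots> = ideal_class B UNIV B" by (rule class_one[OF BCs, symmetric])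
      finally have "ext_prod L B \<in> ideal_class B UNIV B"
        using class_iff[OF BCs one_car[OF BCs] extB_car[OF ABs L(1)]] by blast
      then obtain x where x: "unit_in UNIV x" "ext_prod L B = ext_prod (cyc B x) B"
        using cls_mem by blast
      have LBx: "ext_prod L B = cyc B x" using x(2) ep_cyc_ring[OF B B subset_refl] by simp
      obtain y where xy: "x * y = 1" using x(1) unfolding unit_in_def by auto
      have uy: "unit_in UNIV y" using xy unfolding unit_in_def by (auto simp: mult.commute)
      define M where "M = ext_prod (cyc A y) L"
      define M' where "M' = ext_prod (cyc A x) L'"
      have MC: "M \<in> carrier (IG A UNIV)" unfolding M_def by (rule closed[OF ACs cyc_IG[OF ACs uy] L(1)])
      have M'C: "M' \<in> carrier (IG A UNIV)" unfolding M'_def by (rule closed[OF ACs cyc_IG[OF ACs x(1)] L'(1)])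
      have MB: "M \<subseteq> B" unfolding M_def
      proof (rule ep_sub)
        fix a l assume a: "a \<in> cyc A y" and l: "l \<in> L"
        obtain r where r: "r \<in> A" "a = r * y" using a by (rule cycE)
        have "l * 1 \<in> ext_prod L B" by (rule ep_prod[OF l subringD(1)[OF B]])
        then have "l \<in> cyc B x" using LBx by simp
        then obtain b where b: "b \<in> B" "l = b * x" by (rule cycE)
        have "a * l = (r * b) * (x * y)" using r b by (simp add: ac_simps)
        also have "\<dots> = r * b" using xy by simp
        finally show "a * l \<in> B" using r b AB subringD(3)[OF B] by auto
      qed (auto intro: subringD[OF B])
      have LBL': "ext_prod (ext_prod L B) L' = B"
      proof -
        have "ext_prod (ext_prod L B) L' = ext_prod B (ext_prod L L')" by (simp add: ep_ac)
        also have "\<dots> = B" using L'(2) AB_eq[OF ABs] by (simp add: ep_comm)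
        finally show ?thesis .
      qed
      have M'B: "M' \<subseteq> B" unfolding M'_def
      proof (rule ep_sub)
        fix a l assume a: "a \<in> cyc A x" and l: "l \<in> L'"
        obtain r where r: "r \<in> A" "a = r * x" using a by (rule cycE)
        have "x \<in> ext_prod L B" using LBx cyc_self[OF B] by simp
        then have "x * l \<in> B" using ep_prod[OF _ l, of x "ext_prod L B"] LBL' by simp
        then have "r * (x * l) \<in> B" using r AB subringD(3)[OF B] by auto
        then show "a * l \<in> B" using r by (simp add: ac_simps)
      qed (auto intro: subringD[OF B])
      have MM': "ext_prod M M' = A"
      proof -
        have "ext_prod M M' = ext_prod (ext_prod (cyc A y) (cyc A x)) (ext_prod L L')"
          unfolding M_def M'_def by (simp add: ep_ac)
        also have "\<dots> = A" using ep_cyc[OF A, of y x] xy L'(2) AA[OF ABs]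
          by (simp add: cyc_one mult.commute)
        finally show ?thesis .
      qed
      have "submod A UNIV M" "submod A UNIV M'" using MC M'C unfolding IG_def invertible_ideal_def by auto
      then have "submod A B M" "submod A B M'" using MB M'B unfolding submod_def by auto
      then have M1: "M \<in> carrier (IG A B)" using MM' unfolding IG_def invertible_ideal_def by auto
      have "M \<in> ideal_class A UNIV L" using cls_mem uy M_def by blast
      then have "ideal_class A UNIV M = ideal_class A UNIV L" using class_iff[OF ACs L(1) MC] by blast
      then have "Y = f (ideal_class A B M)" using fk[OF M1] L(2) by simp
      then show "Y \<in> f ` carrier (ClassGroup A B)" using car1 M1 by auto
    qed
  qed
  show ?thesis using CG_comm[OF ABs] CG_comm[OF ACs] CG_comm[OF BCs] hf hg fk gk inj img by blast
qed

end
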